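(* Let $A,B$ be anti-Hermitian $D\times D$ complex matrices with $\|A\|_F<\Delta$ and $\|B\|_F<\Delta$, where $\Delta$ is the constant defined below. Then $$\|M(A,B)\|_F^2\le 2\|A\|_F^2+2\|B\|_F^2-\|A-B\|_F^2 .$$
   Context: Frobenius norm $\|X\|_F=\sqrt{\operatorname{tr}X^\dagger X}$; $\operatorname{ad}(X)(Y)=[X,Y]=XY-YX$, and $\|\operatorname{ad}(X)\|_{\mathrm{op}}=\sup_{Y\ne0}\|[X,Y]\|_F/\|Y\|_F$. For $n\ge0$ and $\vec c=(c_1,\dots,c_n)\in\{0,1\}^n$ (with $n=0$ the empty string $\varnothing$), write $X_0=A$, $X_1=B$, and $w_{\vec c}(A,B)=X_{c_1}X_{c_2}\cdots X_{c_n}$. Real numbers $f(\vec c)$ are defined as the coefficients in the formal power series identity in non-commuting variables $A,B$: $\sum_{k=1}^\infty\frac{(-1)^{k-1}}{k}\big(e^Ae^B-I\big)^{k-1}=\sum_{n\ge0}\sum_{\vec c\in\{0,1\}^n}f(\vec c)\,w_{\vec c}(A,B)$, where $e^A=\sum_j A^j/j!$. For $\vec c\in\{0,1\}^n$ define $g(\vec c)$ by $(n+2)g(\vec c)=-f(c_1,\dots,c_n,1)-(-1)^nf(1-c_1,\dots,1-c_n,1)$, and $h(\vec c)=2g(1,c_1,\dots,c_n)-2g(0,c_1,\dots,c_n)+\sum_{m=0}^n(-1)^m g(c_m,c_{m-1},\dots,c_1)\,g(c_{m+1},\dots,c_n)$. (E.g. $g(\varnothing)=\tfrac12$, $g(0)=\tfrac1{12}$,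 $g(1)=-\tfrac1{12}$, $h(\varnothing)=-\tfrac1{12}$.) Let $\operatorname{ad}_{\vec c}=\operatorname{ad}(X_{c_1})\circ\cdots\circ\operatorname{ad}(X_{c_n})$ (identity for $n=0$). When $\|\operatorname{ad}(A)\|_{\mathrm{op}}+\|\operatorname{ad}(B)\|_{\mathrm{op}}<\log2$, define $M(A,B)=A+B+\sum_{n\ge0}\sum_{\vec c\in\{0,1\}^n}g(\vec c)\operatorname{ad}_{\vec c}([A,B])=A+B+\tfrac12[A,B]+\tfrac1{12}([A,[A,B]]+[B,[B,A]])+\cdots$ (the series converges absolutely there). Finally $\delta=\min\Big(\tfrac1{12}\big(\sum_{n\ge1}\sum_{\vec c\in\{0,1\}^n}|h(\vec c)|(\tfrac{\log2}{3})^n\big)^{-1},\,1\Big)>0$ and $\Delta=\min\big(\tfrac{\log2}{6}\delta,\ \tfrac14\log2\big)$. *)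

theory Defs
  imports "HOL-Analysis.Analysis"
begin

(* Words c in {0,1}^n are bool lists; False = 0 (letter A), True = 1 (letter B). *)

(* Formal power series in the non-commuting variables A, B: coefficient functions on words *)
type_synonym ncps = "bool list \<Rightarrow> real"

definition nc_one :: ncps where
  "nc_one w = (if w = [] then 1 else 0)"

definition nc_mult :: "ncps \<Rightarrow> ncps \<Rightarrow> ncps" where
  "nc_mult p q w = (\<Sum>k\<in>{0..length w}. p (take k w) * q (drop k w))"

primrec nc_pow :: "ncps \<Rightarrow> nat \<Rightarrow> ncps" where
  "nc_pow p 0 = nc_one"
| "nc_pow p (Suc k) = nc_mult p (nc_pow p k)"

(* e^A = sum_j A^j / j!  and  e^B = sum_j B^j / j! *)
definition nc_expA :: ncps where
  "nc_expA w = (if (\<forall>x\<in>set w. \<not> x) then 1 / fact (length w) else 0)"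

definition nc_expB :: ncps where
  "nc_expB w = (if (\<forall>x\<in>set w. x) then 1 / fact (length w) else 0)"

definition nc_E :: ncps where
  "nc_E w = nc_mult nc_expA nc_expB w - nc_one w"

(* f(c): coefficient of w_c in sum_{k>=1} (-1)^(k-1)/k (e^A e^B - I)^(k-1);
   for each word only finitely many terms are nonzero *)
definition fcoef :: "bool list \<Rightarrow> real" where
  "fcoef c = (\<Sum>k. (-1) ^ k / real (k + 1) * nc_pow nc_E k c)"

definition gcoef :: "bool list \<Rightarrow> real" where
  "gcoef c = (- fcoef (c @ [True]) - (-1) ^ length c * fcoef (map Not c @ [True]))
              / real (length c + 2)"

definition hcoef :: "bool list \<Rightarrow> real" where
  "hcoef c = 2 * gcoef (True # c) - 2 * gcoef (False # c)
     + (\<Sum>m\<in>{0..length c}. (-1) ^ m * gcoef (rev (take m c)) * gcoef (drop m c))"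

definition deltaC :: real where
  "deltaC = min ((1/12) * inverse
      (\<Sum>n. \<Sum>c\<in>{c :: bool list. length c = Suc n}. \<bar>hcoef c\<bar> * (ln 2 / 3) ^ Suc n)) 1"

definition DeltaC :: real where
  "DeltaC = min (ln 2 / 6 * deltaC) (ln 2 / 4)"

(* matrices: D x D complex matrices, D = CARD('n) *)
definition cadj :: "complex^'n^'n \<Rightarrow> complex^'n^'n" where
  "cadj X = (\<chi> i j. cnj (X $ j $ i))"

definition frob :: "complex^'n^'n \<Rightarrow> real" where
  "frob X = sqrt (Re (trace (cadj X ** X)))"

definition anti_hermitian :: "complex^'n^'n \<Rightarrow> bool" where
  "anti_hermitian X \<longleftrightarrow> cadj X = - X"

definition ad :: "complex^'n^'n \<Rightarrow> complex^'n^'n \<Rightarrow> complex^'n^'n" where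
  "ad X Y = X ** Y - Y ** X"

definition Xl :: "complex^'n^'n \<Rightarrow> complex^'n^'n \<Rightarrow> bool \<Rightarrow> complex^'n^'n" where
  "Xl A B b = (if b then B else A)"

definition adw :: "complex^'n^'n \<Rightarrow> complex^'n^'n \<Rightarrow> bool list \<Rightarrow> complex^'n^'n \<Rightarrow> complex^'n^'n" where
  "adw A B c Y = foldr (\<lambda>b Z. ad (Xl A B b) Z) c Y"

definition Mser :: "complex^'n^'n \<Rightarrow> complex^'n^'n \<Rightarrow> complex^'n^'n" where
  "Mser A B = A + B + (\<Sum>n. \<Sum>c\<in>{c :: bool list. length c = n}.
                          gcoef c *\<^sub>R adw A B c (ad A B))"

end

theory Submission
  imports Defs
begin


definition cinner :: "complex^'n^'n \<Rightarrow> complex^'n^'n \<Rightarrow> complex" where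
  "cinner X Y = (\<Sum>i\<in>UNIV. \<Sum>j\<in>UNIV. cnj (X$i$j) * Y$i$j)"

lemma inner_cinner: "inner (X::complex^'n^'n) Y = Re (cinner X Y)"
  by (simp add: inner_vec_def inner_complex_def cinner_def Re_sum)

lemma frob_norm: "frob (X::complex^'n^'n) = norm X"
proof -
  have "Re (trace (cadj X ** X)) = inner X X"
    unfolding trace_def inner_cinner cinner_def cadj_def matrix_matrix_mult_def
    by (simp only: vec_lambda_beta Re_sum) (rule sum.swap)
  then show ?thesis by (simp add: frob_def norm_eq_sqrt_inner)
qed

lemma sum3_swap: "(\<Sum>i\<in>I. \<Sum>j\<in>J. \<Sum>k\<in>K. f i j k) = (\<Sum>k\<in>K. \<Sum>j\<in>J. \<Sum>i\<in>I. f i j k)"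
proof -
  have "(\<Sum>i\<in>I. \<Sum>j\<in>J. \<Sum>k\<in>K. f i j k) = (\<Sum>i\<in>I. \<Sum>k\<in>K. \<Sum>j\<in>J. f i j k)"
    by (rule sum.cong[OF refl], rule sum.swap)
  also have "\<dots> = (\<Sum>k\<in>K. \<Sum>i\<in>I. \<Sum>j\<in>J. f i j k)" by (rule sum.swap)
  also have "\<dots> = (\<Sum>k\<in>K. \<Sum>j\<in>J. \<Sum>i\<in>I. f i j k)"
    by (rule sum.cong[OF refl], rule sum.swap)
  finally show ?thesis .
qed

lemma cinner_mult_right1: "cinner X ((Z::complex^'n^'n) ** W) = cinner (cadj Z ** X) W"
proof -
  have "cinner X (Z ** W) = (\<Sum>i\<in>UNIV. \<Sum>j\<in>UNIV. \<Sum>k\<in>UNIV. cnj (X$i$j) * Z$i$k * W$k$j)"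
    unfolding cinner_def matrix_matrix_mult_def
    by (simp add: sum_distrib_left mult.assoc)
  also have "\<dots> = (\<Sum>k\<in>UNIV. \<Sum>j\<in>UNIV. \<Sum>i\<in>UNIV. cnj (X$i$j) * Z$i$k * W$k$j)"
    by (rule sum3_swap)
  also have "\<dots> = cinner (cadj Z ** X) W"
    unfolding cinner_def matrix_matrix_mult_def cadj_def
    by (simp add: sum_distrib_right sum_distrib_left mult.commute mult.left_commute)
  finally show ?thesis .
qed

lemma cinner_mult_right2: "cinner X ((W::complex^'n^'n) ** Z) = cinner (X ** cadj Z) W"
proof -
  have "cinner X (W ** Z) = (\<Sum>i\<in>UNIV. \<Sum>j\<in>UNIV. \<Sum>k\<in>UNIV. cnj (X$i$j) * W$i$k * Z$k$j)"
    unfolding cinner_def matrix_matrix_mult_def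
    by (simp add: sum_distrib_left mult.assoc)
  also have "\<dots> = (\<Sum>i\<in>UNIV. \<Sum>k\<in>UNIV. \<Sum>j\<in>UNIV. cnj (X$i$j) * W$i$k * Z$k$j)"
    by (rule sum.cong, simp) (rule sum.swap)
  also have "\<dots> = cinner (X ** cadj Z) W"
    unfolding cinner_def matrix_matrix_mult_def cadj_def
    by (simp add: sum_distrib_right sum_distrib_left mult.commute mult.left_commute)
  finally show ?thesis .
qed

lemma neg_mult: "(- (A::complex^'n^'n)) ** X = - (A ** X)" "X ** (- A) = - (X ** A)"
  by (simp_all add: matrix_matrix_mult_def vec_eq_iff sum_negf)

lemma cinner_diff: "cinner X (Y - Z) = cinner X Y - cinner X Z" "cinner (Y - Z) X = cinner Y X - cinner Z X"
  "cinner (- Y) X = - cinner Y X"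
  by (simp_all add: cinner_def sum_subtractf ring_distribs sum_negf)

lemma ad_skew:
  assumes "anti_hermitian (A::complex^'n^'n)"
  shows "inner X (ad A Y) = - inner (ad A X) Y"
proof -
  have c: "cadj A = - A" using assms by (simp add: anti_hermitian_def)
  have 1: "cinner X (A ** Y) = - cinner (A ** X) Y"
    using cinner_mult_right1[of X A Y] by (simp add: c neg_mult cinner_diff)
  have 2: "cinner X (Y ** A) = - cinner (X ** A) Y"
    using cinner_mult_right2[of X Y A] by (simp add: c neg_mult cinner_diff)
  show ?thesis
    unfolding inner_cinner ad_def cinner_diff 1 2
    by simp
qed

lemma norm_sq_mat: "norm (Z::complex^'n^'n) ^ 2 = (\<Sum>i\<in>UNIV. \<Sum>j\<in>UNIV. (cmod (Z$i$j))^2)"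
  by (simp add: norm_vec_def L2_set_def sum_nonneg)

lemma norm_mult_mat: "norm ((X::complex^'n^'n) ** (Y::complex^'n^'n)) \<le> norm X * norm Y"
proof -
  have "norm (X ** Y) ^ 2 = (\<Sum>i\<in>UNIV. \<Sum>j\<in>UNIV. (cmod (\<Sum>k\<in>UNIV. X$i$k * Y$k$j))^2)"
    apply (subst norm_sq_mat) by (simp add: matrix_matrix_mult_def)
  also have "\<dots> \<le> (\<Sum>i\<in>UNIV. \<Sum>j\<in>UNIV. (\<Sum>k\<in>UNIV. (cmod (X$i$k))^2) * (\<Sum>k\<in>UNIV. (cmod (Y$k$j))^2))"
  proof (intro sum_mono)
    fix i j
    have "cmod (\<Sum>k\<in>UNIV. X$i$k * Y$k$j) \<le> (\<Sum>k\<in>UNIV. cmod (X$i$k) * cmod (Y$k$j))"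
      by (rule order_trans[OF norm_sum]) (simp add: norm_mult)
    then have "(cmod (\<Sum>k\<in>UNIV. X$i$k * Y$k$j))^2 \<le> (\<Sum>k\<in>UNIV. cmod (X$i$k) * cmod (Y$k$j))^2"
      by (simp add: power_mono)
    also have "\<dots> \<le> (\<Sum>k\<in>UNIV. (cmod (X$i$k))^2) * (\<Sum>k\<in>UNIV. (cmod (Y$k$j))^2)"
      by (rule Cauchy_Schwarz_ineq_sum)
    finally show "(cmod (\<Sum>k\<in>UNIV. X$i$k * Y$k$j))^2 \<le> (\<Sum>k\<in>UNIV. (cmod (X$i$k))^2) * (\<Sum>k\<in>UNIV. (cmod (Y$k$j))^2)" .
  qed
  also have "\<dots> = (\<Sum>i\<in>UNIV. \<Sum>k\<in>UNIV. (cmod (X$i$k))^2) * (\<Sum>j\<in>UNIV. \<Sum>k\<in>UNIV. (cmod (Y$k$j))^2)"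
    by (simp only: sum_product)
  also have "\<dots> = (\<Sum>i\<in>UNIV. \<Sum>k\<in>UNIV. (cmod (X$i$k))^2) * (\<Sum>k\<in>UNIV. \<Sum>j\<in>UNIV. (cmod (Y$k$j))^2)"
    by (subst (2) sum.swap) (rule refl)
  also have "\<dots> = (norm X * norm Y)^2" by (simp only: norm_sq_mat power_mult_distrib)
  finally show ?thesis by (simp add: power_mono_iff[symmetric])
qed

lemma norm_ad: "norm (ad (X::complex^'n^'n) Y) \<le> 2 * norm X * norm Y"
proof -
  have "norm (ad X Y) \<le> norm (X ** Y) + norm (Y ** X)" unfolding ad_def by (rule norm_triangle_ineq4)
  also have "\<dots> \<le> norm X * norm Y + norm Y * norm X" by (intro add_mono norm_mult_mat)
  finally show ?thesis by simp
qed


abbreviation W :: "nat \<Rightarrow> bool list set" where "W n \<equiv> {c. length c = n}"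

lemma finite_W: "finite (W n)"
  using finite_lists_length_eq[of "UNIV::bool set" n] by simp

lemma sum_split_W:
  assumes "k \<le> n"
  shows "(\<Sum>w\<in>W n. F (take k w) (drop k w)) = (\<Sum>u\<in>W k. \<Sum>v\<in>W (n-k). F u v)"
proof -
  have "(\<Sum>w\<in>W n. F (take k w) (drop k w)) = (\<Sum>p\<in>W k \<times> W (n-k). F (fst p) (snd p))"
    by (rule sum.reindex_bij_witness[where j="\<lambda>w. (take k w, drop k w)" and i="\<lambda>p. fst p @ snd p"])
       (use assms in auto)
  also have "\<dots> = (\<Sum>u\<in>W k. \<Sum>v\<in>W (n-k). F u v)"
    by (simp add: sum.cartesian_product case_prod_beta)
  finally show ?thesis .
qed

lemma sum_W_Suc: "(\<Sum>c\<in>W (Suc n). f c) = (\<Sum>w\<in>W n. f (False#w) + f (True#w))"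
proof -
  have "(\<Sum>c\<in>W (Suc n). f c) = (\<Sum>p\<in>UNIV \<times> W n. f (fst p # snd p))"
    by (rule sum.reindex_bij_witness[where j="\<lambda>c. (hd c, tl c)" and i="\<lambda>p. fst p # snd p"])
       (auto simp: length_Suc_conv)
  also have "\<dots> = (\<Sum>b\<in>UNIV. \<Sum>w\<in>W n. f (b # w))"
    by (simp add: sum.cartesian_product case_prod_beta)
  also have "\<dots> = (\<Sum>w\<in>W n. f (False#w) + f (True#w))"
    by (simp add: UNIV_bool sum.distrib)
  finally show ?thesis .
qed

lemma sum_W_rev: "(\<Sum>c\<in>W n. f (rev c)) = (\<Sum>c\<in>W n. f c)"
  by (rule sum.reindex_bij_witness[where j="rev" and i="rev"]) auto

lemma W0: "W 0 = {[]}" by auto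

lemma nc_E_nil: "nc_E [] = 0"
  by (simp add: nc_E_def nc_mult_def nc_expA_def nc_expB_def nc_one_def)

lemma expA_nonneg: "0 \<le> nc_expA c" by (simp add: nc_expA_def)
lemma expB_nonneg: "0 \<le> nc_expB c" by (simp add: nc_expB_def)

lemma nc_mult_nonneg: "(\<And>w. 0 \<le> p w) \<Longrightarrow> (\<And>w. 0 \<le> q w) \<Longrightarrow> 0 \<le> nc_mult p q c"
  unfolding nc_mult_def by (intro sum_nonneg mult_nonneg_nonneg) auto

lemma nc_E_nonneg: "0 \<le> nc_E c"
proof (cases "c = []")
  case True then show ?thesis by (simp add: nc_E_nil)
next
  case False
  then show ?thesis unfolding nc_E_def nc_one_def
    using nc_mult_nonneg[OF expA_nonneg expB_nonneg] by simp
qed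

lemma ncpow_nonneg: "0 \<le> nc_pow nc_E k c"
  by (induction k arbitrary: c) (auto simp: nc_one_def intro!: nc_mult_nonneg nc_E_nonneg)

lemma ncpow_zero: "length c < k \<Longrightarrow> nc_pow nc_E k c = 0"
proof (induction k arbitrary: c)
  case 0 then show ?case by simp
next
  case (Suc k)
  have "\<And>j. j \<in> {0..length c} \<Longrightarrow> nc_E (take j c) * nc_pow nc_E k (drop j c) = 0"
  proof -
    fix j assume j: "j \<in> {0..length c}"
    show "nc_E (take j c) * nc_pow nc_E k (drop j c) = 0"
    proof (cases "j = 0")
      case True then show ?thesis by (simp add: nc_E_nil)
    next
      case False
      then have "length (drop j c) < k" using Suc.prems j by auto
      then show ?thesis using Suc.IH by simp
    qed
  qed
  then show ?case unfolding nc_pow.simps nc_mult_def by (intro sum.neutral) blast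
qed

lemma fcoef_finite: "fcoef c = (\<Sum>k\<le>length c. (-1)^k / real (k+1) * nc_pow nc_E k c)"
  unfolding fcoef_def by (rule suminf_finite) (auto simp: ncpow_zero)

lemma abs_fcoef: "\<bar>fcoef c\<bar> \<le> (\<Sum>k\<le>length c. nc_pow nc_E k c)"
proof -
  have "\<bar>fcoef c\<bar> \<le> (\<Sum>k\<le>length c. \<bar>(-1)^k / real (k+1) * nc_pow nc_E k c\<bar>)"
    unfolding fcoef_finite by (rule sum_abs)
  also have "\<dots> \<le> (\<Sum>k\<le>length c. nc_pow nc_E k c)"
  proof (rule sum_mono)
    fix k
    have "\<bar>(-1)^k / real (k+1) * nc_pow nc_E k c\<bar> = nc_pow nc_E k c / real (k+1)"
      using ncpow_nonneg[of k c] by (simp add: abs_mult power_abs)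
    also have "\<dots> \<le> nc_pow nc_E k c" using ncpow_nonneg[of k c]
      by (simp add: field_simps)
    finally show "\<bar>(-1)^k / real (k+1) * nc_pow nc_E k c\<bar> \<le> nc_pow nc_E k c" .
  qed
  finally show ?thesis .
qed

lemma sum_W_mult: "(\<Sum>c\<in>W n. nc_mult p q c) = (\<Sum>j\<le>n. (\<Sum>u\<in>W j. p u) * (\<Sum>v\<in>W (n-j). q v))"
proof -
  have "(\<Sum>c\<in>W n. nc_mult p q c) = (\<Sum>c\<in>W n. \<Sum>j\<le>n. p (take j c) * q (drop j c))"
    by (rule sum.cong) (auto simp: nc_mult_def atLeast0AtMost)
  also have "\<dots> = (\<Sum>j\<le>n. \<Sum>c\<in>W n. p (take j c) * q (drop j c))"
    by (rule sum.swap)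
  also have "\<dots> = (\<Sum>j\<le>n. \<Sum>u\<in>W j. \<Sum>v\<in>W (n-j). p u * q v)"
    by (rule sum.cong[OF refl]) (rule sum_split_W, simp)
  also have "\<dots> = (\<Sum>j\<le>n. (\<Sum>u\<in>W j. p u) * (\<Sum>v\<in>W (n-j). q v))"
    by (simp add: sum_product)
  finally show ?thesis .
qed

definition Pk :: "nat \<Rightarrow> nat \<Rightarrow> real" where "Pk k n = (\<Sum>c\<in>W n. nc_pow nc_E k c)"
definition ee :: "nat \<Rightarrow> real" where "ee j = (\<Sum>c\<in>W j. nc_E c)"
definition TT :: "nat \<Rightarrow> real" where "TT n = (\<Sum>k\<le>n. Pk k n)"

lemma Pk_Suc: "Pk (Suc k) n = (\<Sum>j\<le>n. ee j * Pk k (n-j))"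
  unfolding Pk_def ee_def by (simp add: sum_W_mult)

lemma Pk_zero: "n < k \<Longrightarrow> Pk k n = 0"
  unfolding Pk_def by (simp add: ncpow_zero)

lemma Pk_nonneg: "0 \<le> Pk k n"
  unfolding Pk_def by (intro sum_nonneg ncpow_nonneg)

lemma ee0: "ee 0 = 0" by (simp add: ee_def W0 nc_E_nil)

lemma ee_nonneg: "0 \<le> ee j" unfolding ee_def by (intro sum_nonneg nc_E_nonneg)

lemma sum_expA_le: "(\<Sum>u\<in>W i. nc_expA u) \<le> 1"
proof -
  have "(\<Sum>u\<in>W i. nc_expA u) \<le> (\<Sum>u\<in>W i. if u = replicate i False then 1 else 0)"
  proof (rule sum_mono)
    fix u assume u: "u \<in> W i"
    show "nc_expA u \<le> (if u = replicate i False then 1 else 0)"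
    proof (cases "\<forall>x\<in>set u. \<not> x")
      case True
      then have "u = replicate i False" using u replicate_length_same[of u False] by auto
      then show ?thesis using True by (simp add: nc_expA_def)
    next
      case False then show ?thesis using u by (auto simp: nc_expA_def)
    qed
  qed
  also have "\<dots> = 1" using finite_W[of i] by (simp add: sum.delta)
  finally show ?thesis .
qed

lemma sum_expB_le: "(\<Sum>u\<in>W i. nc_expB u) \<le> 1"
proof -
  have "(\<Sum>u\<in>W i. nc_expB u) \<le> (\<Sum>u\<in>W i. if u = replicate i True then 1 else 0)"
  proof (rule sum_mono)
    fix u assume u: "u \<in> W i"
    show "nc_expB u \<le> (if u = replicate i True then 1 else 0)"
    proof (cases "\<forall>x\<in>set u. x")
      case True
      then have "u = replicate i True" using u replicate_length_same[of u True] by auto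
      then show ?thesis using True by (simp add: nc_expB_def)
    next
      case False then show ?thesis using u by (auto simp: nc_expB_def)
    qed
  qed
  also have "\<dots> = 1" using finite_W[of i] by (simp add: sum.delta)
  finally show ?thesis .
qed

lemma ee_le: "ee j \<le> 2^j"
proof -
  have "ee j \<le> (\<Sum>c\<in>W j. nc_mult nc_expA nc_expB c)"
    unfolding ee_def nc_E_def by (rule sum_mono) (simp add: nc_one_def)
  also have "\<dots> = (\<Sum>i\<le>j. (\<Sum>u\<in>W i. nc_expA u) * (\<Sum>v\<in>W (j-i). nc_expB v))"
    by (rule sum_W_mult)
  also have "\<dots> \<le> (\<Sum>i\<le>j. 1 * 1)"
    by (intro sum_mono mult_mono sum_expA_le sum_expB_le sum_nonneg expA_nonneg expB_nonneg) auto
  also have "\<dots> = real (Suc j)" by simp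
  also have "\<dots> \<le> 2^j"
  proof -
    have "Suc j \<le> 2^j" by (induction j) auto
    then have "real (Suc j) \<le> real (2^j)" by (simp only: of_nat_le_iff)
    then show ?thesis by simp
  qed
  finally show ?thesis .
qed

lemma geom_half: "(\<Sum>j\<in>{1..n}. (1/2::real)^j) = 1 - (1/2)^n"
  by (induction n) (auto simp: sum.atLeast_Suc_atMost_Suc_shift)

lemma TT_le: "TT n \<le> 4^n"
proof (induction n rule: less_induct)
  case (less n)
  show ?case
  proof (cases n)
    case 0
    then show ?thesis by (simp add: TT_def Pk_def W0 nc_one_def)
  next
    case (Suc m)
    have P0: "Pk 0 n = 0" using Suc unfolding Pk_def nc_pow.simps nc_one_def by (intro sum.neutral) auto
    have "TT n = Pk 0 n + (\<Sum>k\<le>m. Pk (Suc k) n)"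
      unfolding TT_def Suc by (rule sum.atMost_Suc_shift)
    also have "\<dots> = (\<Sum>k\<le>m. \<Sum>j\<le>n. ee j * Pk k (n-j))"
      using P0 by (simp add: Pk_Suc)
    also have "\<dots> = (\<Sum>j\<le>n. ee j * (\<Sum>k\<le>m. Pk k (n-j)))"
      by (subst sum.swap) (simp add: sum_distrib_left)
    also have "\<dots> \<le> (\<Sum>j\<le>n. if j = 0 then 0 else 4^n * (1/2)^j)"
    proof (rule sum_mono)
      fix j assume j: "j \<in> {..n}"
      show "ee j * (\<Sum>k\<le>m. Pk k (n-j)) \<le> (if j = 0 then 0 else 4^n * (1/2)^j)"
      proof (cases "j = 0")
        case True then show ?thesis by (simp add: ee0)
      next
        case False
        have "(\<Sum>k\<le>m. Pk k (n-j)) = (\<Sum>k\<le>n-j. Pk k (n-j))"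
          by (rule sum.mono_neutral_right) (use False Suc j in \<open>auto simp: Pk_zero\<close>)
        also have "\<dots> = TT (n-j)" by (simp add: TT_def)
        also have "\<dots> \<le> 4^(n-j)" using less.IH[of "n-j"] False j by auto
        finally have le: "(\<Sum>k\<le>m. Pk k (n-j)) \<le> 4^(n-j)" .
        have "ee j * (\<Sum>k\<le>m. Pk k (n-j)) \<le> 2^j * 4^(n-j)"
          by (intro mult_mono ee_le le) (auto intro!: sum_nonneg Pk_nonneg)
        also have "\<dots> = 4^n * (1/2)^j"
        proof -
          have "(4::real)^n = 4^j * 4^(n-j)" using j by (simp add: power_add[symmetric])
          moreover have "(4::real)^j = 2^j * 2^j" by (simp add: power_mult_distrib[symmetric])
          ultimately show ?thesis by (simp add: power_one_over field_simps)
        qed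
        finally show ?thesis using False by simp
      qed
    qed
    also have "\<dots> = 4^n * (\<Sum>j\<in>{1..n}. (1/2)^j)"
    proof -
      have "(\<Sum>j\<le>n. if j = 0 then 0 else 4^n * (1/2::real)^j) = (\<Sum>j\<in>{1..n}. 4^n * (1/2)^j)"
        by (rule sum.mono_neutral_cong_right) auto
      then show ?thesis by (simp add: sum_distrib_left)
    qed
    also have "\<dots> \<le> 4^n"
    proof -
      have "(\<Sum>j\<in>{1..n}. (1/2::real)^j) \<le> 1" unfolding geom_half by simp
      then show ?thesis by (simp add: mult_left_le)
    qed
    finally show ?thesis .
  qed
qed

lemma sum_abs_fcoef: "(\<Sum>c\<in>W n. \<bar>fcoef c\<bar>) \<le> 4^n"
proof -
  have "(\<Sum>c\<in>W n. \<bar>fcoef c\<bar>) \<le> (\<Sum>c\<in>W n. \<Sum>k\<le>n. nc_pow nc_E k c)"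
    by (rule sum_mono) (use abs_fcoef in auto)
  also have "\<dots> = TT n" unfolding TT_def Pk_def by (rule sum.swap)
  finally show ?thesis using TT_le[of n] by simp
qed

lemma sum_abs_fcoef_image:
  assumes inj: "inj_on h (W n)" and img: "h ` W n \<subseteq> W m"
  shows "(\<Sum>c\<in>W n. \<bar>fcoef (h c)\<bar>) \<le> 4^m"
proof -
  have "(\<Sum>c\<in>W n. \<bar>fcoef (h c)\<bar>) = (\<Sum>d\<in>h ` W n. \<bar>fcoef d\<bar>)"
    using inj by (simp add: sum.reindex)
  also have "\<dots> \<le> (\<Sum>d\<in>W m. \<bar>fcoef d\<bar>)"
    by (rule sum_mono2[OF finite_W img]) auto
  also have "\<dots> \<le> 4^m" by (rule sum_abs_fcoef)
  finally show ?thesis .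
qed

lemma sum_abs_gcoef: "(\<Sum>c\<in>W n. \<bar>gcoef c\<bar>) \<le> 4^(n+1)"
proof -
  have "(\<Sum>c\<in>W n. \<bar>gcoef c\<bar>) \<le> (\<Sum>c\<in>W n. (\<bar>fcoef (c @ [True])\<bar> + \<bar>fcoef (map Not c @ [True])\<bar>) / 2)"
  proof (rule sum_mono)
    fix c :: "bool list"
    have "\<bar>- fcoef (c @ [True]) - (-1) ^ length c * fcoef (map Not c @ [True])\<bar>
       \<le> \<bar>fcoef (c @ [True])\<bar> + \<bar>fcoef (map Not c @ [True])\<bar>"
    proof -
      have e: "\<bar>(-1::real) ^ length c * fcoef (map Not c @ [True])\<bar> = \<bar>fcoef (map Not c @ [True])\<bar>"
        by (simp add: abs_mult power_abs)
      show ?thesis using abs_triangle_ineq4[of "- fcoef (c @ [True])" "(-1) ^ length c * fcoef (map Not c @ [True])"]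
        unfolding e by simp
    qed
    moreover have "(2::real) \<le> real (length c + 2)" by simp
    ultimately have "\<bar>- fcoef (c @ [True]) - (-1) ^ length c * fcoef (map Not c @ [True])\<bar> / real (length c + 2)
        \<le> (\<bar>fcoef (c @ [True])\<bar> + \<bar>fcoef (map Not c @ [True])\<bar>) / 2"
      by (intro frac_le) auto
    then show "\<bar>gcoef c\<bar> \<le> (\<bar>fcoef (c @ [True])\<bar> + \<bar>fcoef (map Not c @ [True])\<bar>) / 2"
      by (simp add: gcoef_def)
  qed
  also have "\<dots> = ((\<Sum>c\<in>W n. \<bar>fcoef (c @ [True])\<bar>) + (\<Sum>c\<in>W n. \<bar>fcoef (map Not c @ [True])\<bar>)) / 2"
    by (simp only: sum.distrib sum_divide_distrib add_divide_distrib)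
  also have "\<dots> \<le> (4^(n+1) + 4^(n+1)) / 2"
    by (intro divide_right_mono add_mono sum_abs_fcoef_image) (auto simp: inj_on_def)
  finally show ?thesis by simp
qed

lemma sum_abs_hcoef: "(\<Sum>c\<in>W n. \<bar>hcoef c\<bar>) \<le> real (n+3) * 4^(n+2)"
proof -
  let ?g = "\<lambda>c. \<bar>gcoef c\<bar>"
  have "(\<Sum>c\<in>W n. \<bar>hcoef c\<bar>) \<le> (\<Sum>c\<in>W n. 2 * (?g (False # c) + ?g (True # c))
          + (\<Sum>m\<le>n. ?g (rev (take m c)) * ?g (drop m c)))"
  proof (rule sum_mono)
    fix c :: "bool list" assume c: "c \<in> W n"
    have "\<bar>(\<Sum>m\<in>{0..length c}. (-1) ^ m * gcoef (rev (take m c)) * gcoef (drop m c))\<bar>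
          \<le> (\<Sum>m\<in>{0..length c}. \<bar>(-1) ^ m * gcoef (rev (take m c)) * gcoef (drop m c)\<bar>)"
      by (rule sum_abs)
    also have "\<dots> = (\<Sum>m\<le>n. ?g (rev (take m c)) * ?g (drop m c))"
      using c by (simp add: abs_mult power_abs atLeast0AtMost)
    finally have 1: "\<bar>(\<Sum>m\<in>{0..length c}. (-1) ^ m * gcoef (rev (take m c)) * gcoef (drop m c))\<bar>
          \<le> (\<Sum>m\<le>n. ?g (rev (take m c)) * ?g (drop m c))" .
    show "\<bar>hcoef c\<bar> \<le> 2 * (?g (False # c) + ?g (True # c)) + (\<Sum>m\<le>n. ?g (rev (take m c)) * ?g (drop m c))"
      unfolding hcoef_def using 1 by (smt (verit))
  qed
  also have "\<dots> = 2 * (\<Sum>c\<in>W (Suc n). ?g c) + (\<Sum>m\<le>n. \<Sum>c\<in>W n. ?g (rev (take m c)) * ?g (drop m c))"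
    by (simp add: sum.distrib sum_W_Suc sum_distrib_left sum.swap[of _ "{..n}"])
  also have "(\<Sum>m\<le>n. \<Sum>c\<in>W n. ?g (rev (take m c)) * ?g (drop m c)) = (\<Sum>m\<le>n. (\<Sum>u\<in>W m. ?g u) * (\<Sum>v\<in>W (n-m). ?g v))"
  proof (rule sum.cong[OF refl])
    fix m assume "m \<in> {..n}"
    then have "(\<Sum>c\<in>W n. ?g (rev (take m c)) * ?g (drop m c)) = (\<Sum>u\<in>W m. \<Sum>v\<in>W (n-m). ?g (rev u) * ?g v)"
      by (intro sum_split_W) auto
    also have "\<dots> = (\<Sum>u\<in>W m. ?g (rev u)) * (\<Sum>v\<in>W (n-m). ?g v)" by (simp add: sum_product)
    also have "\<dots> = (\<Sum>u\<in>W m. ?g u) * (\<Sum>v\<in>W (n-m). ?g v)" using sum_W_rev[of "\<lambda>u. ?g u" m] by simp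
    finally show "(\<Sum>c\<in>W n. ?g (rev (take m c)) * ?g (drop m c)) = (\<Sum>u\<in>W m. ?g u) * (\<Sum>v\<in>W (n-m). ?g v)" .
  qed
  also have "2 * (\<Sum>c\<in>W (Suc n). ?g c) + (\<Sum>m\<le>n. (\<Sum>u\<in>W m. ?g u) * (\<Sum>v\<in>W (n-m). ?g v))
      \<le> 2 * 4^(n+2) + (\<Sum>m\<le>n. 4^(m+1) * 4^(n-m+1))"
    using sum_abs_gcoef[of "Suc n"]
    by (intro add_mono sum_mono mult_mono sum_abs_gcoef sum_nonneg) auto
  also have "(\<Sum>m\<le>n. (4::real)^(m+1) * 4^(n-m+1)) = (\<Sum>m\<le>n. 4^(n+2))"
    by (rule sum.cong[OF refl]) (auto simp: power_add[symmetric])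
  finally show ?thesis by (simp add: algebra_simps)
qed

lemma lin_le_exp: "real n + 4 \<le> 30 * (27/26)^n"
proof -
  have "1 + real n * (1/26) \<le> (1 + 1/26)^n" by (rule Bernoulli_inequality) simp
  then show ?thesis by simp
qed

lemma S_term_bound: "(\<Sum>c\<in>W (Suc n). \<bar>hcoef c\<bar> * (ln 2/3)^Suc n) \<le> 480 * (25/26)^n"
proof -
  let ?r = "ln 2 / 3 :: real"
  have r0: "0 \<le> ?r" by simp
  have r1: "4 * ?r \<le> 25/27" using ln2_le_25_over_36 by simp
  have "(\<Sum>c\<in>W (Suc n). \<bar>hcoef c\<bar> * ?r^Suc n) = (\<Sum>c\<in>W (Suc n). \<bar>hcoef c\<bar>) * ?r^Suc n"
    by (simp add: sum_distrib_right)
  also have "\<dots> \<le> (real (Suc n + 3) * 4^(Suc n + 2)) * ?r^Suc n"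
    by (intro mult_right_mono sum_abs_hcoef) simp
  also have "\<dots> = 16 * (real n + 4) * (4 * ?r)^Suc n"
    unfolding power_mult_distrib by (simp add: power_add algebra_simps)
  also have "\<dots> \<le> 16 * (real n + 4) * (25/27)^Suc n"
    by (intro mult_left_mono power_mono r1) auto
  also have "\<dots> \<le> 16 * (30 * (27/26)^n) * (25/27)^Suc n"
    by (intro mult_right_mono mult_left_mono lin_le_exp) auto
  also have "\<dots> = 480 * (25/26)^n * (25/27)"
  proof -
    have "(27/26::real)^n * (25/27)^n = (25/26)^n" by (simp add: power_mult_distrib[symmetric])
    then show ?thesis by (simp add: algebra_simps)
  qed
  also have "\<dots> \<le> 480 * (25/26)^n" by simp
  finally show ?thesis .
qed

lemma S_summable: "summable (\<lambda>n. \<Sum>c\<in>W (Suc n). \<bar>hcoef c\<bar> * (ln 2/3)^Suc n)"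
proof (rule summable_comparison_test'[where N=0])
  show "summable (\<lambda>n. 480 * (25/26::real)^n)" by (intro summable_mult summable_geometric) simp
  fix n
  have "0 \<le> (\<Sum>c\<in>W (Suc n). \<bar>hcoef c\<bar> * (ln 2/3)^Suc n)" by (intro sum_nonneg) simp
  then show "norm (\<Sum>c\<in>W (Suc n). \<bar>hcoef c\<bar> * (ln 2/3)^Suc n) \<le> 480 * (25/26)^n"
    using S_term_bound[of n] by simp
qed

lemma E_vals: "nc_E [True] = 1" "nc_E [False] = 1" "nc_E [True, True] = 1/2" "nc_E [False, True] = 1"
  by (auto simp: nc_E_def nc_mult_def nc_expA_def nc_expB_def nc_one_def numeral_2_eq_2)

lemma f_vals: "fcoef [True] = -1/2" "fcoef [True, True] = 1/12" "fcoef [False, True] = -1/6"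
  by (simp_all add: fcoef_finite nc_mult_def nc_one_def E_vals nc_E_nil numeral_2_eq_2)

lemma g_vals: "gcoef [] = 1/2" "gcoef [False] = 1/12" "gcoef [True] = -1/12"
  by (simp_all add: gcoef_def f_vals)

lemma h_nil: "hcoef [] = -1/12"
  by (simp add: hcoef_def g_vals)



lemma Cauchy_product_inner_sums:
  fixes a b :: "nat \<Rightarrow> 'a::{real_inner,banach}"
  assumes a: "summable (\<lambda>k. norm (a k))"
    and b: "summable (\<lambda>k. norm (b k))"
  shows "(\<lambda>k. \<Sum>i\<le>k. inner (a i) (b (k - i))) sums (inner (\<Sum>k. a k) (\<Sum>k. b k))"
proof -
  let ?S1 = "\<lambda>n::nat. {..<n} \<times> {..<n}"
  let ?S2 = "\<lambda>n::nat. {(i,j). i + j < n}"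
  have S1_mono: "\<And>m n. m \<le> n \<Longrightarrow> ?S1 m \<subseteq> ?S1 n" by auto
  have S2_le_S1: "\<And>n. ?S2 n \<subseteq> ?S1 n" by auto
  have S1_le_S2: "\<And>n. ?S1 (n div 2) \<subseteq> ?S2 n" by auto
  have finite_S1: "\<And>n. finite (?S1 n)" by simp
  with S2_le_S1 have finite_S2: "\<And>n. finite (?S2 n)" by (rule finite_subset)

  let ?g = "\<lambda>(i,j). inner (a i) (b j)"
  let ?f = "\<lambda>(i,j). norm (a i) * norm (b j)"
  have f_nonneg: "\<And>x. 0 \<le> ?f x" by auto
  then have norm_sum_f: "\<And>A. norm (sum ?f A) = sum ?f A"
    unfolding real_norm_def
    by (simp only: abs_of_nonneg sum_nonneg [rule_format])

  have "(\<lambda>n. inner (\<Sum>k<n. a k) (\<Sum>k<n. b k)) \<longlonglongrightarrow> inner (\<Sum>k. a k) (\<Sum>k. b k)"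
    by (intro tendsto_inner summable_LIMSEQ summable_norm_cancel [OF a] summable_norm_cancel [OF b])
  moreover have "inner (\<Sum>k<n. a k) (\<Sum>k<n. b k) = sum ?g (?S1 n)" for n
  proof -
    have "inner (\<Sum>k<n. a k) (\<Sum>k<n. b k) = (\<Sum>i<n. \<Sum>j<n. inner (a i) (b j))"
      by (simp add: inner_sum_left inner_sum_right, rule sum.swap)
    also have "\<dots> = sum ?g (?S1 n)" by (rule sum.cartesian_product)
    finally show ?thesis .
  qed
  ultimately have 1: "(\<lambda>n. sum ?g (?S1 n)) \<longlonglongrightarrow> inner (\<Sum>k. a k) (\<Sum>k. b k)"
    by simp

  have "(\<lambda>n. (\<Sum>k<n. norm (a k)) * (\<Sum>k<n. norm (b k))) \<longlonglongrightarrow> (\<Sum>k. norm (a k)) * (\<Sum>k. norm (b k))"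
    using a b by (intro tendsto_mult summable_LIMSEQ)
  then have "(\<lambda>n. sum ?f (?S1 n)) \<longlonglongrightarrow> (\<Sum>k. norm (a k)) * (\<Sum>k. norm (b k))"
    by (simp only: sum_product sum.Sigma [rule_format] finite_lessThan)
  then have "convergent (\<lambda>n. sum ?f (?S1 n))"
    by (rule convergentI)
  then have Cauchy: "Cauchy (\<lambda>n. sum ?f (?S1 n))"
    by (rule convergent_Cauchy)
  have "Zfun (\<lambda>n. sum ?f (?S1 n - ?S2 n)) sequentially"
  proof (rule ZfunI, simp only: eventually_sequentially norm_sum_f)
    fix r :: real
    assume r: "0 < r"
    from CauchyD [OF Cauchy r] obtain N
      where "\<forall>m\<ge>N. \<forall>n\<ge>N. norm (sum ?f (?S1 m) - sum ?f (?S1 n)) < r" ..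
    then have "\<And>m n. N \<le> n \<Longrightarrow> n \<le> m \<Longrightarrow> norm (sum ?f (?S1 m - ?S1 n)) < r"
      by (simp only: sum_diff finite_S1 S1_mono)
    then have N: "\<And>m n. N \<le> n \<Longrightarrow> n \<le> m \<Longrightarrow> sum ?f (?S1 m - ?S1 n) < r"
      by (simp only: norm_sum_f)
    show "\<exists>N. \<forall>n\<ge>N. sum ?f (?S1 n - ?S2 n) < r"
    proof (intro exI allI impI)
      fix n
      assume "2 * N \<le> n"
      then have n: "N \<le> n div 2" by simp
      have "sum ?f (?S1 n - ?S2 n) \<le> sum ?f (?S1 n - ?S1 (n div 2))"
        by (intro sum_mono2 finite_Diff finite_S1 f_nonneg Diff_mono subset_refl S1_le_S2)
      also have "\<dots> < r"
        using n div_le_dividend by (rule N)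
      finally show "sum ?f (?S1 n - ?S2 n) < r" .
    qed
  qed
  then have "Zfun (\<lambda>n. sum ?g (?S1 n - ?S2 n)) sequentially"
    apply (rule Zfun_le [rule_format])
    apply (simp only: norm_sum_f)
    apply (rule order_trans [OF norm_sum sum_mono])
    apply (auto simp add: Cauchy_Schwarz_ineq2)
    done
  then have 2: "(\<lambda>n. sum ?g (?S1 n) - sum ?g (?S2 n)) \<longlonglongrightarrow> 0"
    unfolding tendsto_Zfun_iff diff_0_right
    by (simp only: sum_diff finite_S1 S2_le_S1)
  with 1 have "(\<lambda>n. sum ?g (?S2 n)) \<longlonglongrightarrow> inner (\<Sum>k. a k) (\<Sum>k. b k)"
    by (rule Lim_transform2)
  then show ?thesis
    by (simp only: sums_def sum.triangle_reindex)
qed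

lemma adw_Nil: "adw A B [] Y = Y" by (simp add: adw_def)
lemma adw_Cons: "adw A B (b # c) Y = ad (Xl A B b) (adw A B c Y)" by (simp add: adw_def)
lemma adw_append: "adw A B (c @ d) Y = adw A B c (adw A B d Y)" by (simp add: adw_def)

lemma Xl_ah: "anti_hermitian A \<Longrightarrow> anti_hermitian B \<Longrightarrow> anti_hermitian (Xl A B b)"
  by (simp add: Xl_def)

lemma adw_adj:
  assumes "anti_hermitian A" "anti_hermitian B"
  shows "inner (adw A B c X) Y = (-1)^length c * inner X (adw A B (rev c) Y)"
proof (induction c arbitrary: Y)
  case Nil then show ?case by (simp add: adw_Nil)
next
  case (Cons b c)
  have "inner (adw A B (b # c) X) Y = - inner (adw A B c X) (ad (Xl A B b) Y)"
    unfolding adw_Cons using ad_skew[OF Xl_ah[OF assms, of b], of "adw A B c X" Y] by simp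
  also have "\<dots> = (-1)^length (b#c) * inner X (adw A B (rev (b#c)) Y)"
    using Cons.IH[of "ad (Xl A B b) Y"] by (simp add: adw_append adw_Cons adw_Nil)
  finally show ?case .
qed

lemma adw_norm:
  assumes "norm A \<le> m" "norm B \<le> m"
  shows "norm (adw A B c Y) \<le> (2*m)^length c * norm Y"
proof (induction c)
  case Nil then show ?case by (simp add: adw_Nil)
next
  case (Cons b c)
  have m0: "0 \<le> m" using assms(1) norm_ge_zero order_trans by blast
  have "norm (adw A B (b # c) Y) \<le> 2 * norm (Xl A B b) * norm (adw A B c Y)"
    unfolding adw_Cons by (rule norm_ad)
  also have "\<dots> \<le> 2 * m * ((2*m)^length c * norm Y)"
    using assms m0 by (intro mult_mono Cons.IH) (auto simp: Xl_def)
  finally show ?case by simp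
qed

lemma matrix_add_rdistrib': "((A::complex^'n^'n) + B) ** C = A ** C + B ** C"
  by (simp add: matrix_matrix_mult_def vec_eq_iff sum.distrib ring_distribs)

lemma ad_AB: "ad A ((A::complex^'n^'n) + B) = ad A B" "ad B (A + B) = - ad A B"
  by (simp_all add: ad_def matrix_add_ldistrib matrix_add_rdistrib' algebra_simps)

definition rr :: "complex^'n^'n \<Rightarrow> complex^'n^'n \<Rightarrow> nat \<Rightarrow> complex^'n^'n" where
  "rr A B n = (\<Sum>c\<in>W n. gcoef c *\<^sub>R adw A B c (ad A B))"

lemma u_part:
  assumes ah: "anti_hermitian A" "anti_hermitian B"
  shows "inner (A+B) (rr A B (Suc N)) = (\<Sum>w\<in>W N. (gcoef (True#w) - gcoef (False#w)) * inner (ad A B) (adw A B w (ad A B)))"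
proof -
  let ?K = "ad A B"
  have "inner (A+B) (rr A B (Suc N)) = (\<Sum>c\<in>W (Suc N). gcoef c * inner (A+B) (adw A B c ?K))"
    by (simp add: rr_def inner_sum_right)
  also have "\<dots> = (\<Sum>w\<in>W N. gcoef (False#w) * inner (A+B) (ad A (adw A B w ?K)) + gcoef (True#w) * inner (A+B) (ad B (adw A B w ?K)))"
    by (simp add: sum_W_Suc adw_Cons Xl_def)
  also have "\<dots> = (\<Sum>w\<in>W N. (gcoef (True#w) - gcoef (False#w)) * inner ?K (adw A B w ?K))"
  proof (rule sum.cong[OF refl])
    fix w
    have 1: "inner (A+B) (ad A (adw A B w ?K)) = - inner ?K (adw A B w ?K)"
      using ad_skew[OF ah(1), of "A+B" "adw A B w ?K"] by (simp add: ad_AB)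
    have 2: "inner (A+B) (ad B (adw A B w ?K)) = inner ?K (adw A B w ?K)"
      using ad_skew[OF ah(2), of "A+B" "adw A B w ?K"] by (simp add: ad_AB)
    show "gcoef (False#w) * inner (A+B) (ad A (adw A B w ?K)) + gcoef (True#w) * inner (A+B) (ad B (adw A B w ?K))
        = (gcoef (True#w) - gcoef (False#w)) * inner ?K (adw A B w ?K)"
      unfolding 1 2 by (simp add: algebra_simps)
  qed
  finally show ?thesis .
qed

lemma v_part:
  assumes ah: "anti_hermitian A" "anti_hermitian B" and iN: "i \<le> N"
  shows "inner (rr A B i) (rr A B (N-i)) = (\<Sum>w\<in>W N. (-1)^i * gcoef (rev (take i w)) * gcoef (drop i w) * inner (ad A B) (adw A B w (ad A B)))"
proof -
  let ?K = "ad A B"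
  let ?F = "\<lambda>c d. (-1)^i * gcoef (rev c) * gcoef d * inner ?K (adw A B (c @ d) ?K)"
  have "inner (rr A B i) (rr A B (N-i)) = (\<Sum>c\<in>W i. \<Sum>d\<in>W (N-i). gcoef c * gcoef d * inner (adw A B c ?K) (adw A B d ?K))"
    unfolding rr_def inner_sum_left
    by (rule sum.cong[OF refl]) (simp add: inner_sum_right sum_distrib_left mult_ac)
  also have "\<dots> = (\<Sum>c\<in>W i. \<Sum>d\<in>W (N-i). ?F (rev c) d)"
    by (intro sum.cong refl) (simp add: adw_adj[OF ah] adw_append)
  also have "\<dots> = (\<Sum>c\<in>W i. \<Sum>d\<in>W (N-i). ?F c d)"
    by (rule sum_W_rev[of "\<lambda>c. \<Sum>d\<in>W (N-i). ?F c d" i])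
  also have "\<dots> = (\<Sum>w\<in>W N. ?F (take i w) (drop i w))"
    by (rule sum_split_W[symmetric, OF iN])
  also have "\<dots> = (\<Sum>w\<in>W N. (-1)^i * gcoef (rev (take i w)) * gcoef (drop i w) * inner ?K (adw A B w ?K))"
    by simp
  finally show ?thesis .
qed

lemma Q_identity:
  assumes ah: "anti_hermitian A" "anti_hermitian B"
  shows "2 * inner (A+B) (rr A B (Suc N)) + (\<Sum>i\<le>N. inner (rr A B i) (rr A B (N-i)))
       = (\<Sum>w\<in>W N. hcoef w * inner (ad A B) (adw A B w (ad A B)))"
proof -
  let ?I = "\<lambda>w. inner (ad A B) (adw A B w (ad A B))"
  have "(\<Sum>i\<le>N. inner (rr A B i) (rr A B (N-i))) = (\<Sum>i\<le>N. \<Sum>w\<in>W N. (-1)^i * gcoef (rev (take i w)) * gcoef (drop i w) * ?I w)"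
    by (rule sum.cong[OF refl]) (use v_part[OF ah] in auto)
  also have "\<dots> = (\<Sum>w\<in>W N. (\<Sum>i\<le>N. (-1)^i * gcoef (rev (take i w)) * gcoef (drop i w)) * ?I w)"
    by (subst sum.swap) (simp add: sum_distrib_right)
  finally have v: "(\<Sum>i\<le>N. inner (rr A B i) (rr A B (N-i))) = \<dots>" .
  show ?thesis
    unfolding v u_part[OF ah] sum_distrib_left sum.distrib[symmetric]
  proof (rule sum.cong[OF refl])
    fix w assume w: "w \<in> W N"
    then show "2 * ((gcoef (True # w) - gcoef (False # w)) * ?I w) + (\<Sum>i\<le>N. (-1)^i * gcoef (rev (take i w)) * gcoef (drop i w)) * ?I w
       = hcoef w * ?I w"
      by (simp add: hcoef_def atLeast0AtMost algebra_simps)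
  qed
qed

lemma inner_K0:
  assumes ah: "anti_hermitian A" "anti_hermitian B"
  shows "inner (A+B) (ad A B) = 0"
proof -
  have "ad A A = 0" "ad B B = 0" by (simp_all add: ad_def)
  have "ad A B = - ad B A" by (simp add: ad_def)
  have 1: "inner A (ad A B) = 0" using ad_skew[OF ah(1), of A B] \<open>ad A A = 0\<close> by simp
  have 2: "inner B (ad A B) = 0" using ad_skew[OF ah(2), of B A] \<open>ad B B = 0\<close> \<open>ad A B = - ad B A\<close> by simp
  show ?thesis using 1 2 by (simp add: inner_add_left)
qed

theorem lemma5:
  fixes A B :: "complex^'n^'n"
  assumes "anti_hermitian A" and "anti_hermitian B"
    and "frob A < DeltaC" and "frob B < DeltaC"
  shows "(frob (Mser A B))^2 \<le> 2 * (frob A)^2 + 2 * (frob B)^2 - (frob (A - B))^2"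
proof -
  note ah = assms(1,2)
  define K where "K = ad A B"
  define m where "m = max (norm A) (norm B)"
  define s where "s = 2 * m"
  define a where "a = (\<lambda>n. \<Sum>c\<in>W (Suc n). \<bar>hcoef c\<bar> * (ln 2/3)^Suc n)"
  define S where "S = suminf a"
  have a_sum: "summable a" unfolding a_def by (rule S_summable)
  have a_nonneg: "\<And>n. 0 \<le> a n" unfolding a_def by (intro sum_nonneg) simp
  have S0: "0 \<le> S" unfolding S_def using a_sum a_nonneg by (rule suminf_nonneg)
  have d1: "deltaC \<le> 1" and d2: "deltaC \<le> 1/12 * inverse S"
    unfolding deltaC_def S_def a_def by simp_all
  have mA: "norm A \<le> m" "norm B \<le> m" by (simp_all add: m_def)
  have m0: "0 \<le> m" using mA(1) norm_ge_zero order_trans by blast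
  have mlt: "m < DeltaC" using assms(3,4) by (simp add: m_def frob_norm)
  have "DeltaC \<le> ln 2 / 6 * deltaC" by (simp add: DeltaC_def)
  then have s_lt: "s < ln 2 / 3 * deltaC" using mlt by (simp add: s_def)
  have s0: "0 \<le> s" using m0 by (simp add: s_def)
  have ln0: "0 \<le> ln 2 / (3::real)" by simp
  have dpos: "0 < deltaC"
  proof (rule ccontr)
    assume "\<not> 0 < deltaC"
    then have "ln 2 / 3 * deltaC \<le> 0" using ln0 by (simp add: mult_nonneg_nonpos)
    then show False using s_lt s0 by linarith
  qed
  have "ln 2 / 3 * deltaC \<le> ln 2 / 3 * 1" using d1 ln0 by (rule mult_left_mono)
  then have s_le: "s \<le> ln 2 / 3" using s_lt by linarith
  have s4: "4 * s < 1" using s_le ln2_le_25_over_36 by simp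
  have adwb: "\<And>c Y. norm (adw A B c Y) \<le> s^length c * norm Y"
    unfolding s_def by (rule adw_norm[OF mA])
  have rr_bound: "norm (rr A B n) \<le> 4 * norm K * (4 * s)^n" for n
  proof -
    have "norm (rr A B n) \<le> (\<Sum>c\<in>W n. norm (gcoef c *\<^sub>R adw A B c K))"
      unfolding rr_def K_def by (rule norm_sum)
    also have "\<dots> \<le> (\<Sum>c\<in>W n. \<bar>gcoef c\<bar> * (s^n * norm K))"
      by (rule sum_mono) (use adwb in \<open>auto intro!: mult_left_mono\<close>)
    also have "\<dots> = (\<Sum>c\<in>W n. \<bar>gcoef c\<bar>) * (s^n * norm K)" by (simp add: sum_distrib_right)
    also have "\<dots> \<le> 4^(n+1) * (s^n * norm K)"
      by (intro mult_right_mono sum_abs_gcoef) (use s0 in auto)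
    also have "\<dots> = 4 * norm K * (4 * s)^n" by (simp add: power_mult_distrib)
    finally show ?thesis .
  qed
  have sumr: "summable (\<lambda>n. norm (rr A B n))"
  proof (rule summable_comparison_test'[where N=0])
    show "summable (\<lambda>n. 4 * norm K * (4 * s)^n)" using s0 s4 by (intro summable_mult summable_geometric) simp
    show "norm (norm (rr A B n)) \<le> 4 * norm K * (4 * s)^n" for n using rr_bound[of n] by simp
  qed
  define R where "R = (\<Sum>n. rr A B n)"
  have M_eq: "Mser A B = (A + B) + R" unfolding Mser_def R_def rr_def by simp
  have r_sums: "rr A B sums R" unfolding R_def using summable_norm_cancel[OF sumr] by (rule summable_sums)
  have u_sums: "(\<lambda>n. 2 * inner (A+B) (rr A B n)) sums (2 * inner (A+B) R)"
    by (intro sums_mult bounded_linear.sums[OF bounded_linear_inner_right r_sums])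
  have u0: "2 * inner (A+B) (rr A B 0) = 0"
    using inner_K0[OF ah] by (simp add: rr_def W0 adw_Nil)
  have us: "(\<lambda>N. 2 * inner (A+B) (rr A B (Suc N))) sums (2 * inner (A+B) R)"
    using u_sums u0 sums_Suc_iff[of "\<lambda>n. 2 * inner (A+B) (rr A B n)" "2 * inner (A+B) R"] by simp
  have v_sums: "(\<lambda>N. \<Sum>i\<le>N. inner (rr A B i) (rr A B (N-i))) sums inner R R"
    unfolding R_def by (rule Cauchy_product_inner_sums[OF sumr sumr])
  define Q where "Q = (\<lambda>N. \<Sum>w\<in>W N. hcoef w * inner K (adw A B w K))"
  have Q_sums: "Q sums (2 * inner (A+B) R + inner R R)"
  proof -
    have "Q = (\<lambda>N. 2 * inner (A+B) (rr A B (Suc N)) + (\<Sum>i\<le>N. inner (rr A B i) (rr A B (N-i))))"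
      unfolding Q_def K_def by (simp add: Q_identity[OF ah])
    then show ?thesis using sums_add[OF us v_sums] by simp
  qed
  have Q0: "Q 0 = - 1/12 * norm K ^ 2"
    by (simp add: Q_def W0 adw_Nil h_nil power2_norm_eq_inner)
  have QS: "(\<lambda>N. Q (Suc N)) sums (2 * inner (A+B) R + inner R R - Q 0)"
    using Q_sums by (simp add: sums_Suc_iff)
  have Qb: "Q (Suc N) \<le> deltaC * norm K ^ 2 * a N" for N
  proof -
    have sp: "s^Suc N \<le> deltaC * (ln 2/3)^Suc N"
    proof -
      have "s^Suc N \<le> (ln 2 / 3 * deltaC)^Suc N" using s_lt s0 by (intro power_mono) auto
      also have "\<dots> = (ln 2/3)^Suc N * deltaC^Suc N" by (rule power_mult_distrib)
      also have "\<dots> \<le> (ln 2/3)^Suc N * deltaC"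
      proof (intro mult_left_mono)
        have "deltaC^Suc N = deltaC * deltaC^N" by simp
        also have "\<dots> \<le> deltaC * 1" using dpos d1 by (intro mult_left_mono power_le_one) auto
        finally show "deltaC^Suc N \<le> deltaC" by simp
      qed simp
      finally show ?thesis by (simp only: mult.commute)
    qed
    have "Q (Suc N) \<le> (\<Sum>w\<in>W (Suc N). \<bar>hcoef w * inner K (adw A B w K)\<bar>)"
      unfolding Q_def by (rule order_trans[OF abs_ge_self sum_abs])
    also have "\<dots> \<le> (\<Sum>w\<in>W (Suc N). \<bar>hcoef w\<bar> * (deltaC * (ln 2/3)^Suc N * norm K ^ 2))"
    proof (rule sum_mono)
      fix w assume w: "w \<in> W (Suc N)"
      have "\<bar>inner K (adw A B w K)\<bar> \<le> norm K * norm (adw A B w K)" by (rule Cauchy_Schwarz_ineq2)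
      also have "\<dots> \<le> norm K * (s^Suc N * norm K)" using adwb[of w K] w by (intro mult_left_mono) auto
      also have "\<dots> \<le> norm K * (deltaC * (ln 2/3)^Suc N * norm K)" using sp by (intro mult_left_mono mult_right_mono) auto
      finally have "\<bar>inner K (adw A B w K)\<bar> \<le> deltaC * (ln 2/3)^Suc N * norm K ^ 2" by (simp add: power2_eq_square algebra_simps)
      then show "\<bar>hcoef w * inner K (adw A B w K)\<bar> \<le> \<bar>hcoef w\<bar> * (deltaC * (ln 2/3)^Suc N * norm K ^ 2)"
        unfolding abs_mult by (rule mult_left_mono) simp_all
    qed
    also have "\<dots> = deltaC * norm K ^ 2 * a N" by (simp add: a_def sum_distrib_left sum_distrib_right algebra_simps)
    finally show ?thesis .
  qed
  have "2 * inner (A+B) R + inner R R - Q 0 \<le> deltaC * norm K ^ 2 * S"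
    using sums_le[OF Qb QS sums_mult[OF summable_sums[OF a_sum]]] by (simp add: S_def)
  moreover have "deltaC * S \<le> 1/12"
  proof (cases "S = 0")
    case True then show ?thesis by simp
  next
    case False
    then have "0 < S" using S0 by simp
    then have "deltaC * S \<le> 1/12 * inverse S * S" using d2 by (intro mult_right_mono) auto
    also have "\<dots> = 1/12" using \<open>0 < S\<close> by simp
    finally show ?thesis .
  qed
  ultimately have key: "2 * inner (A+B) R + inner R R \<le> 0"
    unfolding Q0 using mult_left_mono[OF \<open>deltaC * S \<le> 1/12\<close>, of "norm K ^ 2"]
    by (simp add: algebra_simps)
  have lhs: "(frob (Mser A B))^2 = inner (A+B) (A+B) + (2 * inner (A+B) R + inner R R)"
    unfolding frob_norm M_eq power2_norm_eq_inner
    by (simp add: inner_add_left inner_add_right inner_commute)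
  have rhs: "2 * (frob A)^2 + 2 * (frob B)^2 - (frob (A - B))^2 = inner (A+B) (A+B)"
    unfolding frob_norm power2_norm_eq_inner
    by (simp add: inner_add_left inner_add_right inner_diff_left inner_diff_right inner_commute)
  show ?thesis unfolding lhs rhs using key by simp
qed


end
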